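(* The covering number of the lattice of integer flows satisfies $\mathrm{Cov}(\Lambda)=\max_D q(v^D)$, where $D$ ranges over the strongly connected orientations of $G^\circ$ (the graph $G$ with its bridges deleted) and $v^D\in H$ is the unique flow satisfying $2\langle v^D,x^C\rangle=q(x^C)$ for every circuit $C\subseteq D$.
   Context: $G=(V,E)$ is a finite connected graph, possibly with parallel edges and loops; $\mathbb E$ is the set of oriented edges ($e$ and its reverse $\bar e$). Real $1$-chains $x:\mathbb E\to\mathbb R$ satisfy $x_{\bar e}=-x_e$; $\langle x,y\rangle=\sum_{e\in E}x_ey_e$, $q(x)=\langle x,x\rangle$. A flow satisfies $\sum_{e\text{ with tail }v}x_e=0$ at every vertex $v$; $H$ is the space of real flows and $\Lambda$ the lattice of integer flows. A circuit is an orientation of a cycle as a directed cycle; $x^C_e=1$ if $e\in C$, $-1$ if $\bar e\in C$, $0$ otherwise. An orientation is strongly connected if on each connected component any two vertices are joined by directed paths in both directions. For a full-rank lattice $\mathcal L$ in a real vector space with positive quadratic form $q$, the covering number $\mathrm{Cov}(\mathcal L)$ is the smallest $r$ such that for every point $x$ there is $m\in\mathcal L$ with $q(x-m)\le r$. *)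

theory Defs
  imports Complex_Main
begin

text \<open>A finite multigraph (parallel edges and loops allowed) is given by a vertex set V,
an edge set E and, for each edge, a reference tail src and head tgt.
An oriented edge is a pair (e, b): b = True is e in its reference direction,
b = False is the reverse edge.
A real 1-chain x is stored by its values on the reference orientations
(x_e for e in E); the value on the reverse edge is -x_e.\<close>

definition otail :: "('e \<Rightarrow> 'v) \<Rightarrow> ('e \<Rightarrow> 'v) \<Rightarrow> 'e \<times> bool \<Rightarrow> 'v" where
  "otail src tgt d = (if snd d then src (fst d) else tgt (fst d))"

definition ohead :: "('e \<Rightarrow> 'v) \<Rightarrow> ('e \<Rightarrow> 'v) \<Rightarrow> 'e \<times> bool \<Rightarrow> 'v" where
  "ohead src tgt d = (if snd d then tgt (fst d) else src (fst d))"

definition oval :: "('e \<Rightarrow> real) \<Rightarrow> 'e \<times> bool \<Rightarrow> real" where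
  "oval x d = (if snd d then x (fst d) else - x (fst d))"

definition inner_ch :: "'e set \<Rightarrow> ('e \<Rightarrow> real) \<Rightarrow> ('e \<Rightarrow> real) \<Rightarrow> real" where
  "inner_ch E x y = (\<Sum>e\<in>E. x e * y e)"

definition qf :: "'e set \<Rightarrow> ('e \<Rightarrow> real) \<Rightarrow> real" where
  "qf E x = inner_ch E x x"

definition is_flow :: "'v set \<Rightarrow> 'e set \<Rightarrow> ('e \<Rightarrow> 'v) \<Rightarrow> ('e \<Rightarrow> 'v) \<Rightarrow> ('e \<Rightarrow> real) \<Rightarrow> bool" where
  "is_flow V E src tgt x \<longleftrightarrow>
     (\<forall>e. e \<notin> E \<longrightarrow> x e = 0) \<and>
     (\<forall>v\<in>V. (\<Sum>d\<in>{d \<in> E \<times> UNIV. otail src tgt d = v}. oval x d) = 0)"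

definition flows :: "'v set \<Rightarrow> 'e set \<Rightarrow> ('e \<Rightarrow> 'v) \<Rightarrow> ('e \<Rightarrow> 'v) \<Rightarrow> ('e \<Rightarrow> real) set" where
  "flows V E src tgt = {x. is_flow V E src tgt x}"

definition int_flows :: "'v set \<Rightarrow> 'e set \<Rightarrow> ('e \<Rightarrow> 'v) \<Rightarrow> ('e \<Rightarrow> 'v) \<Rightarrow> ('e \<Rightarrow> real) set" where
  "int_flows V E src tgt = {x \<in> flows V E src tgt. \<forall>e\<in>E. x e \<in> \<int>}"

definition cov_number :: "(('e \<Rightarrow> real) \<Rightarrow> real) \<Rightarrow> ('e \<Rightarrow> real) set \<Rightarrow> ('e \<Rightarrow> real) set \<Rightarrow> real" where
  "cov_number Q S L = Inf {r. \<forall>x\<in>S. \<exists>m\<in>L. Q (\<lambda>e. x e - m e) \<le> r}"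

definition adj :: "('e \<Rightarrow> 'v) \<Rightarrow> ('e \<Rightarrow> 'v) \<Rightarrow> 'e set \<Rightarrow> ('v \<times> 'v) set" where
  "adj src tgt F = {(src e, tgt e) | e. e \<in> F} \<union> {(tgt e, src e) | e. e \<in> F}"

definition is_bridge :: "'e set \<Rightarrow> ('e \<Rightarrow> 'v) \<Rightarrow> ('e \<Rightarrow> 'v) \<Rightarrow> 'e \<Rightarrow> bool" where
  "is_bridge E src tgt e \<longleftrightarrow> e \<in> E \<and> (src e, tgt e) \<notin> (adj src tgt (E - {e}))\<^sup>*"

definition bridgeless_edges :: "'e set \<Rightarrow> ('e \<Rightarrow> 'v) \<Rightarrow> ('e \<Rightarrow> 'v) \<Rightarrow> 'e set" where
  "bridgeless_edges E src tgt = {e \<in> E. \<not> is_bridge E src tgt e}"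

definition is_orientation :: "'e set \<Rightarrow> ('e \<times> bool) set \<Rightarrow> bool" where
  "is_orientation F D \<longleftrightarrow> D \<subseteq> F \<times> UNIV \<and>
     (\<forall>e\<in>F. ((e, True) \<in> D) \<noteq> ((e, False) \<in> D))"

definition darcs :: "('e \<Rightarrow> 'v) \<Rightarrow> ('e \<Rightarrow> 'v) \<Rightarrow> ('e \<times> bool) set \<Rightarrow> ('v \<times> 'v) set" where
  "darcs src tgt D = {(otail src tgt d, ohead src tgt d) | d. d \<in> D}"

text \<open>Strongly connected orientation of the graph (V, F): on each connected component
any two vertices are joined by directed paths (in both directions).\<close>
definition strongly_connected_orientation ::
  "'v set \<Rightarrow> 'e set \<Rightarrow> ('e \<Rightarrow> 'v) \<Rightarrow> ('e \<Rightarrow> 'v) \<Rightarrow> ('e \<times> bool) set \<Rightarrow> bool" where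
  "strongly_connected_orientation V F src tgt D \<longleftrightarrow> is_orientation F D \<and>
     (\<forall>u\<in>V. \<forall>v\<in>V. (u, v) \<in> (adj src tgt F)\<^sup>* \<longrightarrow> (u, v) \<in> (darcs src tgt D)\<^sup>*)"

text \<open>A circuit: the set of oriented edges of a closed directed walk with pairwise
distinct edges and pairwise distinct vertices (a cycle oriented as a directed cycle;
loops and pairs of parallel edges included).\<close>
definition is_circuit :: "'e set \<Rightarrow> ('e \<Rightarrow> 'v) \<Rightarrow> ('e \<Rightarrow> 'v) \<Rightarrow> ('e \<times> bool) set \<Rightarrow> bool" where
  "is_circuit E src tgt C \<longleftrightarrow> (\<exists>ds. ds \<noteq> [] \<and> set ds = C \<and> (\<forall>d\<in>set ds. fst d \<in> E) \<and>
     distinct (map fst ds) \<and> distinct (map (otail src tgt) ds) \<and>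
     (\<forall>i<length ds. ohead src tgt (ds ! i) = otail src tgt (ds ! ((i + 1) mod length ds))))"

definition circ_chain :: "('e \<times> bool) set \<Rightarrow> 'e \<Rightarrow> real" where
  "circ_chain C e = (if (e, True) \<in> C then 1 else if (e, False) \<in> C then -1 else 0)"

definition is_vD :: "'v set \<Rightarrow> 'e set \<Rightarrow> ('e \<Rightarrow> 'v) \<Rightarrow> ('e \<Rightarrow> 'v) \<Rightarrow> ('e \<times> bool) set
    \<Rightarrow> ('e \<Rightarrow> real) \<Rightarrow> bool" where
  "is_vD V E src tgt D v \<longleftrightarrow> v \<in> flows V E src tgt \<and>
     (\<forall>C. is_circuit E src tgt C \<and> C \<subseteq> D \<longrightarrow>
        2 * inner_ch E v (circ_chain C) = qf E (circ_chain C))"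

definition vD :: "'v set \<Rightarrow> 'e set \<Rightarrow> ('e \<Rightarrow> 'v) \<Rightarrow> ('e \<Rightarrow> 'v) \<Rightarrow> ('e \<times> bool) set \<Rightarrow> 'e \<Rightarrow> real" where
  "vD V E src tgt D = (THE v. is_vD V E src tgt D v)"

end

theory Submission
  imports Defs
begin

definition rv :: "'e \<times> bool \<Rightarrow> 'e \<times> bool" where "rv d = (fst d, \<not> snd d)"

lemma rv_rv[simp]: "rv (rv d) = d" by (simp add: rv_def)
lemma fst_rv[simp]: "fst (rv d) = fst d" by (simp add: rv_def)
lemma otail_rv[simp]: "otail s t (rv d) = ohead s t d" by (simp add: rv_def otail_def ohead_def)
lemma ohead_rv[simp]: "ohead s t (rv d) = otail s t d" by (simp add: rv_def otail_def ohead_def)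
lemma oval_rv[simp]: "oval x (rv d) = - oval x d" by (simp add: rv_def oval_def)
lemma rv_neq[simp]: "rv d \<noteq> d" by (cases d) (simp add: rv_def)
lemma inj_rv: "inj rv" by (metis injI rv_rv)

lemma inner_ch_sym: "inner_ch E x y = inner_ch E y x"
  by (simp add: inner_ch_def mult.commute)
lemma inner_ch_add_left: "inner_ch E (\<lambda>e. x e + y e) z = inner_ch E x z + inner_ch E y z"
  by (simp add: inner_ch_def distrib_right sum.distrib)
lemma inner_ch_diff_left: "inner_ch E (\<lambda>e. x e - y e) z = inner_ch E x z - inner_ch E y z"
  by (simp add: inner_ch_def left_diff_distrib sum_subtractf)
lemma inner_ch_scale_left: "inner_ch E (\<lambda>e. c * x e) z = c * inner_ch E x z"
  by (simp add: inner_ch_def sum_distrib_left mult.assoc)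
lemma inner_ch_add_right: "inner_ch E z (\<lambda>e. x e + y e) = inner_ch E z x + inner_ch E z y"
  by (simp add: inner_ch_def distrib_left sum.distrib)
lemma inner_ch_diff_right: "inner_ch E z (\<lambda>e. x e - y e) = inner_ch E z x - inner_ch E z y"
  by (simp add: inner_ch_def right_diff_distrib sum_subtractf)
lemma inner_ch_scale_right: "inner_ch E z (\<lambda>e. c * x e) = c * inner_ch E z x"
  by (simp add: inner_ch_def sum_distrib_left mult.left_commute)
lemma inner_ch_zero_left[simp]: "inner_ch E (\<lambda>e. 0) z = 0"
  by (simp add: inner_ch_def)
lemma inner_ch_sum_list_left:
  "inner_ch E (\<lambda>e. \<Sum>p\<leftarrow>L. f p e) z = (\<Sum>p\<leftarrow>L. inner_ch E (f p) z)"
  by (induction L) (simp_all add: inner_ch_add_left)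
lemma qf_nonneg: "qf E x \<ge> 0"
  by (simp add: qf_def inner_ch_def sum_nonneg)
lemma qf_zero_iff: "finite E \<Longrightarrow> qf E x = 0 \<longleftrightarrow> (\<forall>e\<in>E. x e = 0)"
  by (simp add: qf_def inner_ch_def sum_nonneg_eq_0_iff)
lemma qf_diff: "qf E (\<lambda>e. x e - y e) = qf E x - 2 * inner_ch E x y + qf E y"
  unfolding qf_def inner_ch_diff_left inner_ch_diff_right by (simp add: inner_ch_sym[of E y x])
lemma inner_le_qf: "2 * inner_ch E x y \<le> qf E x + qf E y"
  using qf_diff[of E x y] qf_nonneg[of E "\<lambda>e. x e - y e"] by linarith


lemma adj_sym: "(a, b) \<in> (adj s t F)\<^sup>* \<Longrightarrow> (b, a) \<in> (adj s t F)\<^sup>*"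
proof -
  have "(adj s t F)\<inverse> = adj s t F" unfolding adj_def by auto
  moreover assume "(a, b) \<in> (adj s t F)\<^sup>*"
  ultimately show ?thesis by (metis converseI rtrancl_converseI)
qed

lemma adj_arc: "fst d \<in> F \<Longrightarrow> (otail s t d, ohead s t d) \<in> adj s t F"
  unfolding adj_def otail_def ohead_def by (cases d; cases "snd d") auto

lemma adj_eq_darcs: "adj s t F = darcs s t (F \<times> UNIV)"
proof
  show "adj s t F \<subseteq> darcs s t (F \<times> UNIV)"
  proof
    fix p assume "p \<in> adj s t F"
    then obtain e where e: "e \<in> F" "p = (s e, t e) \<or> p = (t e, s e)" unfolding adj_def by blast
    then have "p = (otail s t (e, True), ohead s t (e, True)) \<or> p = (otail s t (e, False), ohead s t (e, False))"
      by (auto simp: otail_def ohead_def)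
    then show "p \<in> darcs s t (F \<times> UNIV)" unfolding darcs_def using e(1) by blast
  qed
next
  show "darcs s t (F \<times> UNIV) \<subseteq> adj s t F"
    unfolding darcs_def using adj_arc by fastforce
qed

lemma mod_lemma1: "k < n \<Longrightarrow> Suc m < n \<Longrightarrow> (k + 1 + m) mod n \<noteq> k"
proof
  assume a: "k < n" "Suc m < n" "(k + 1 + m) mod n = k"
  show False
  proof (cases "k + 1 + m < n")
    case True then show ?thesis using a by simp
  next
    case False
    then have "(k + 1 + m) mod n = (k + 1 + m - n) mod n" by (simp add: le_mod_geq)
    also have "\<dots> = k + 1 + m - n" using a False by simp
    finally show ?thesis using a False by arith
  qed
qed

lemma circuit_closure:
  assumes ne: "ds \<noteq> []" and cl: "\<forall>i<length ds. ohead s t (ds ! i) = otail s t (ds ! ((i + 1) mod length ds))"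
    and k: "k < length ds"
    and R: "\<And>j. j < length ds \<Longrightarrow> j \<noteq> k \<Longrightarrow> (otail s t (ds ! j), ohead s t (ds ! j)) \<in> R"
  shows "(ohead s t (ds ! k), otail s t (ds ! k)) \<in> R\<^sup>*"
proof -
  let ?n = "length ds"
  have n: "?n > 0" using ne by simp
  have step: "m < ?n \<Longrightarrow> (otail s t (ds ! ((k + 1) mod ?n)), otail s t (ds ! ((k + 1 + m) mod ?n))) \<in> R\<^sup>*" for m
  proof (induction m)
    case 0 then show ?case by simp
  next
    case (Suc m)
    let ?j = "(k + 1 + m) mod ?n"
    have j: "?j < ?n" using n by simp
    have jk: "?j \<noteq> k" using mod_lemma1[OF k Suc.prems] .
    have "(otail s t (ds ! ?j), ohead s t (ds ! ?j)) \<in> R" using R[OF j jk] .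
    moreover have "ohead s t (ds ! ?j) = otail s t (ds ! ((k + 1 + Suc m) mod ?n))"
      using cl j by (simp add: mod_Suc_eq)
    ultimately show ?case using Suc by (metis Suc_lessD rtrancl_into_rtrancl)
  qed
  have "(otail s t (ds ! ((k + 1) mod ?n)), otail s t (ds ! ((k + 1 + (?n - 1)) mod ?n))) \<in> R\<^sup>*"
    using step n by simp
  moreover have "(k + 1 + (?n - 1)) mod ?n = k" using n k by simp
  ultimately show ?thesis using cl k by simp
qed

lemma dmap_inj: "distinct (map f xs) \<Longrightarrow> i < length xs \<Longrightarrow> j < length xs \<Longrightarrow> f (xs ! i) = f (xs ! j) \<Longrightarrow> i = j"
  using nth_eq_iff_index_eq[of "map f xs" i j] by simp

lemma mod_lemma2: "(i::nat) < n \<Longrightarrow> j < n \<Longrightarrow> (i + 1) mod n = (j + 1) mod n \<Longrightarrow> i = j"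
proof -
  assume a: "i < n" "j < n" "(i + 1) mod n = (j + 1) mod n"
  have h: "x < n \<Longrightarrow> (x + 1) mod n = (if x + 1 = n then 0 else x + 1)" for x :: nat by auto
  show "i = j" using a h[of i] h[of j] by (auto split: if_splits)
qed

lemma oval_circ: "(\<forall>d\<in>C. rv d \<notin> C) \<Longrightarrow> oval (circ_chain C) d = of_bool (d \<in> C) - of_bool (rv d \<in> C)"
  by (cases d; cases "snd d") (auto simp: oval_def circ_chain_def rv_def)

lemma card_inj_fiber: "inj_on f A \<Longrightarrow> card {d\<in>A. f d = v} = card (f ` A \<inter> {v})"
proof -
  assume i: "inj_on f A"
  have "f ` {d\<in>A. f d = v} = f ` A \<inter> {v}" by auto
  moreover have "inj_on f {d\<in>A. f d = v}" using i by (rule inj_on_subset) auto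
  ultimately show ?thesis by (metis card_image)
qed

locale graph =
  fixes V :: "'v set" and E :: "'e set" and src tgt :: "'e \<Rightarrow> 'v"
  assumes finV: "finite V" and finE: "finite E" and endsV: "\<forall>e\<in>E. src e \<in> V \<and> tgt e \<in> V"
begin

abbreviation "ta \<equiv> otail src tgt"
abbreviation "he \<equiv> ohead src tgt"
abbreviation "H \<equiv> flows V E src tgt"

definition Out :: "'v \<Rightarrow> ('e \<times> bool) set" where "Out v = {d \<in> E \<times> UNIV. ta d = v}"

lemma finite_Out[simp]: "finite (Out v)"
proof -
  have "finite (E \<times> (UNIV::bool set))" using finE by simp
  then show ?thesis unfolding Out_def by (rule finite_subset[rotated]) auto
qed

lemma ta_V: "fst d \<in> E \<Longrightarrow> ta d \<in> V" using endsV by (auto simp: otail_def)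
lemma he_V: "fst d \<in> E \<Longrightarrow> he d \<in> V" using endsV by (auto simp: ohead_def)

lemma flow_iff: "x \<in> H \<longleftrightarrow> (\<forall>e. e \<notin> E \<longrightarrow> x e = 0) \<and> (\<forall>v\<in>V. (\<Sum>d\<in>Out v. oval x d) = 0)"
  by (simp add: flows_def is_flow_def Out_def)

lemma oval_add: "oval (\<lambda>e. x e + y e) d = oval x d + oval y d" by (simp add: oval_def)
lemma oval_diff: "oval (\<lambda>e. x e - y e) d = oval x d - oval y d" by (simp add: oval_def)
lemma oval_scale: "oval (\<lambda>e. c * x e) d = c * oval x d" by (simp add: oval_def)

lemma flow_add: "x \<in> H \<Longrightarrow> y \<in> H \<Longrightarrow> (\<lambda>e. x e + y e) \<in> H"
  by (simp add: flow_iff oval_add sum.distrib)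
lemma flow_diff: "x \<in> H \<Longrightarrow> y \<in> H \<Longrightarrow> (\<lambda>e. x e - y e) \<in> H"
  by (simp add: flow_iff oval_diff sum_subtractf)
lemma flow_scale: "x \<in> H \<Longrightarrow> (\<lambda>e. c * x e) \<in> H"
  by (simp add: flow_iff oval_scale flip: sum_distrib_left)
lemma oval_zero[simp]: "oval (\<lambda>e. 0) d = 0" by (simp add: oval_def)
lemma flow_zero: "(\<lambda>e. 0) \<in> H"
  by (simp add: flow_iff)
lemma flow_sum_list: "(\<And>p. p \<in> set L \<Longrightarrow> f p \<in> H) \<Longrightarrow> (\<lambda>e. \<Sum>p\<leftarrow>L. f p e) \<in> H"
proof (induction L)
  case Nil then show ?case using flow_zero by simp
next
  case (Cons a L) then show ?case using flow_add[of "f a" "\<lambda>e. \<Sum>p\<leftarrow>L. f p e"] by simp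
qed


lemma circuitE:
  assumes "is_circuit E src tgt C"
  obtains ds where "ds \<noteq> []" "set ds = C" "\<forall>d\<in>set ds. fst d \<in> E" "distinct (map fst ds)"
    "distinct (map ta ds)" "\<forall>i<length ds. he (ds ! i) = ta (ds ! ((i + 1) mod length ds))"
  using assms unfolding is_circuit_def by blast

lemma circuit_E: "is_circuit E src tgt C \<Longrightarrow> d \<in> C \<Longrightarrow> fst d \<in> E"
  by (erule circuitE) auto

lemma circuit_sub: "is_circuit E src tgt C \<Longrightarrow> C \<subseteq> E \<times> UNIV"
  using circuit_E by force

lemma circuit_finite: "is_circuit E src tgt C \<Longrightarrow> finite C"
  by (erule circuitE) auto

lemma circuit_rv: "is_circuit E src tgt C \<Longrightarrow> d \<in> C \<Longrightarrow> rv d \<notin> C"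
proof (erule circuitE)
  fix ds assume "set ds = C" "distinct (map fst ds)" "d \<in> C"
  then have "inj_on fst C" by (metis distinct_map)
  then show "rv d \<notin> C" using \<open>d \<in> C\<close> by (metis fst_rv inj_on_eq_iff rv_neq)
qed

lemma circuit_inj_fst: "is_circuit E src tgt C \<Longrightarrow> inj_on fst C"
  by (erule circuitE) (metis distinct_map)

lemma circuit_inj_ta: "is_circuit E src tgt C \<Longrightarrow> inj_on ta C"
  by (erule circuitE) (metis distinct_map)

lemma circuit_he:
  assumes "is_circuit E src tgt C"
  shows "inj_on he C" "he ` C = ta ` C"
proof -
  obtain ds where ds: "ds \<noteq> []" "set ds = C" "distinct (map ta ds)"
    "\<forall>i<length ds. he (ds ! i) = ta (ds ! ((i + 1) mod length ds))"
    using assms by (rule circuitE) blast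
  let ?n = "length ds"
  show inj: "inj_on he C"
  proof
    fix x y assume "x \<in> C" "y \<in> C" "he x = he y"
    then obtain i j where ij: "i < ?n" "j < ?n" "x = ds ! i" "y = ds ! j" using ds(2) by (metis in_set_conv_nth)
    have "ta (ds ! ((i + 1) mod ?n)) = ta (ds ! ((j + 1) mod ?n))" using ds(4) ij \<open>he x = he y\<close> by metis
    then have "map ta ds ! ((i + 1) mod ?n) = map ta ds ! ((j + 1) mod ?n)" using ds(1) by simp
    then have "(i + 1) mod ?n = (j + 1) mod ?n" using ds(1,3) nth_eq_iff_index_eq by (metis length_greater_0_conv length_map mod_less_divisor)
    then have "i = j" using mod_lemma2 ij by blast
    then show "x = y" using ij by simp
  qed
  have sub: "he ` C \<subseteq> ta ` C"
  proof
    fix z assume "z \<in> he ` C"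
    then obtain i where i: "i < ?n" "z = he (ds ! i)" using ds(2) by (metis imageE in_set_conv_nth)
    then have "z = ta (ds ! ((i + 1) mod ?n))" using ds(4) by simp
    moreover have "(i + 1) mod ?n < ?n" using ds(1) by simp
    ultimately show "z \<in> ta ` C" using ds(2) by (metis image_eqI nth_mem)
  qed
  have fin: "finite C" using ds(2) by auto
  have "card (he ` C) = card (ta ` C)"
    using card_image[OF inj] card_image[OF circuit_inj_ta[OF assms]] by simp
  then show "he ` C = ta ` C" using sub fin by (simp add: card_subset_eq)
qed

lemma circ_flow:
  assumes c: "is_circuit E src tgt C"
  shows "circ_chain C \<in> H"
proof -
  have rvC: "\<forall>d\<in>C. rv d \<notin> C" using circuit_rv[OF c] by blast
  have out: "circ_chain C e = 0" if "e \<notin> E" for e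
    using circuit_E[OF c, of "(e,True)"] circuit_E[OF c, of "(e,False)"] that by (auto simp: circ_chain_def)
  have cons: "(\<Sum>d\<in>Out v. oval (circ_chain C) d) = 0" for v
  proof -
    have "(\<Sum>d\<in>Out v. oval (circ_chain C) d) = (\<Sum>d\<in>Out v. of_bool (d \<in> C)) - (\<Sum>d\<in>Out v. of_bool (rv d \<in> C))"
      using oval_circ[OF rvC] by (simp add: sum_subtractf)
    also have "\<dots> = real (card (Out v \<inter> {d. d \<in> C})) - real (card (Out v \<inter> {d. rv d \<in> C}))"
      by simp
    also have "Out v \<inter> {d. d \<in> C} = {d\<in>C. ta d = v}"
      using circuit_sub[OF c] by (auto simp: Out_def)
    also have "Out v \<inter> {d. rv d \<in> C} = rv ` {d\<in>C. he d = v}"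
    proof
      show "Out v \<inter> {d. rv d \<in> C} \<subseteq> rv ` {d\<in>C. he d = v}"
        unfolding Out_def by (auto intro!: image_eqI[where x="rv _"])
      show "rv ` {d\<in>C. he d = v} \<subseteq> Out v \<inter> {d. rv d \<in> C}"
      proof
        fix x assume "x \<in> rv ` {d\<in>C. he d = v}"
        then obtain y where y: "y \<in> C" "he y = v" "x = rv y" by blast
        then have "fst x \<in> E" using circuit_E[OF c] by simp
        then show "x \<in> Out v \<inter> {d. rv d \<in> C}" using y unfolding Out_def by (cases x) (auto simp: mem_Times_iff)
      qed
    qed
    also have "card (rv ` {d\<in>C. he d = v}) = card {d\<in>C. he d = v}"
      by (meson card_image inj_on_subset inj_rv subset_UNIV)
    also have "card {d\<in>C. he d = v} = card {d\<in>C. ta d = v}"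
      using card_inj_fiber[OF circuit_he(1)[OF c]] card_inj_fiber[OF circuit_inj_ta[OF c]] circuit_he(2)[OF c]
      by simp
    finally show ?thesis by simp
  qed
  show ?thesis unfolding flow_iff using out cons by blast
qed

lemma circ_int: "is_circuit E src tgt C \<Longrightarrow> circ_chain C \<in> int_flows V E src tgt"
  unfolding int_flows_def using circ_flow by (auto simp: circ_chain_def)

lemma circuit_reach:
  assumes c: "is_circuit E src tgt C" and d: "d \<in> C"
    and R: "\<And>d'. d' \<in> C \<Longrightarrow> fst d' \<noteq> fst d \<Longrightarrow> (ta d', he d') \<in> R"
  shows "(he d, ta d) \<in> R\<^sup>*"
proof -
  obtain ds where ds: "ds \<noteq> []" "set ds = C" "distinct (map fst ds)"
    "\<forall>i<length ds. he (ds ! i) = ta (ds ! ((i + 1) mod length ds))"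
    using c by (rule circuitE) blast
  obtain k where k: "k < length ds" "d = ds ! k" using d ds(2) by (metis in_set_conv_nth)
  have "(he (ds ! k), ta (ds ! k)) \<in> R\<^sup>*"
  proof (rule circuit_closure[OF ds(1) ds(4) k(1)])
    fix j assume j: "j < length ds" "j \<noteq> k"
    then have "fst (ds ! j) \<noteq> fst (ds ! k)" using ds(3) k(1) by (simp add: nth_eq_iff_index_eq[symmetric])
    moreover have "ds ! j \<in> C" using j ds(2) by auto
    ultimately show "(ta (ds ! j), he (ds ! j)) \<in> R" using R k by auto
  qed
  then show ?thesis using k by simp
qed

lemma circuit_not_bridge:
  assumes c: "is_circuit E src tgt C" and d: "d \<in> C"
  shows "fst d \<in> bridgeless_edges E src tgt"
proof -
  let ?f = "fst d"
  have "(he d, ta d) \<in> (adj src tgt (E - {?f}))\<^sup>*"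
    by (rule circuit_reach[OF c d]) (rule adj_arc, use circuit_E[OF c] in auto)
  then have r: "(ta d, he d) \<in> (adj src tgt (E - {?f}))\<^sup>*" "(he d, ta d) \<in> (adj src tgt (E - {?f}))\<^sup>*"
    using adj_sym by auto
  have "(src ?f, tgt ?f) \<in> (adj src tgt (E - {?f}))\<^sup>*"
    using r by (cases "snd d") (auto simp: otail_def ohead_def)
  then show ?thesis using circuit_E[OF c d] by (simp add: bridgeless_edges_def is_bridge_def)
qed

lemma circuit_reach_self:
  assumes c: "is_circuit E src tgt C" and d: "d \<in> C"
  shows "(he d, ta d) \<in> (darcs src tgt C)\<^sup>*"
  by (rule circuit_reach[OF c d]) (auto simp: darcs_def)


lemma inj_fst_arcs: "(\<forall>d\<in>A. rv d \<notin> A) \<Longrightarrow> inj_on fst A"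
proof
  fix x y assume h: "\<forall>d\<in>A. rv d \<notin> A" "x \<in> A" "y \<in> A" "fst x = fst y"
  show "x = y"
  proof (rule ccontr)
    assume "x \<noteq> y"
    then have "y = rv x" using h(4) by (cases x; cases y) (auto simp: rv_def)
    then show False using h by auto
  qed
qed

lemma find_circuit:
  assumes fin: "finite A" and ne: "A \<noteq> {}" and sub: "A \<subseteq> E \<times> UNIV" and rvA: "\<forall>d\<in>A. rv d \<notin> A"
    and succ: "\<forall>d\<in>A. \<exists>d'\<in>A. ta d' = he d"
  shows "\<exists>C. is_circuit E src tgt C \<and> C \<subseteq> A"
proof -
  obtain s where s: "\<forall>d\<in>A. s d \<in> A \<and> ta (s d) = he d" using succ by metis
  obtain d0 where d0: "d0 \<in> A" using ne by blast
  define f where "f k = (s ^^ k) d0" for k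
  have fA: "f k \<in> A" for k by (induction k) (auto simp: f_def d0 s)
  have fS: "f (Suc k) = s (f k)" for k by (simp add: f_def)
  define g where "g k = ta (f k)" for k
  let ?N = "card (ta ` A)"
  have "\<not> inj_on g {0..?N}"
  proof
    assume "inj_on g {0..?N}"
    then have "card (g ` {0..?N}) = ?N + 1" by (simp add: card_image)
    moreover have "g ` {0..?N} \<subseteq> ta ` A" using fA by (auto simp: g_def)
    ultimately show False using fin by (metis Suc_eq_plus1 card_mono finite_imageI not_less_eq_eq order_refl)
  qed
  then have ex: "\<exists>j. \<exists>i<j. g i = g j" by (metis inj_onI atLeastAtMost_iff linorder_neqE_nat)
  define J where "J = (LEAST j. \<exists>i<j. g i = g j)"
  have J: "\<exists>i<J. g i = g J" unfolding J_def using LeastI_ex[OF ex] .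
  have Jmin: "\<And>j. j < J \<Longrightarrow> \<not> (\<exists>i<j. g i = g j)" unfolding J_def using not_less_Least by blast
  obtain i where i: "i < J" "g i = g J" using J by blast
  define ds where "ds = map f [i..<J]"
  have len: "length ds = J - i" by (simp add: ds_def)
  have nth: "t < J - i \<Longrightarrow> ds ! t = f (i + t)" for t by (simp add: ds_def)
  have dist_ta: "distinct (map ta ds)"
  proof -
    have "map ta ds = map g [i..<J]" by (simp add: ds_def g_def)
    moreover have "inj_on g {i..<J}"
    proof
      fix a b assume ab: "a \<in> {i..<J}" "b \<in> {i..<J}" "g a = g b"
      show "a = b"
      proof (rule ccontr)
        assume "a \<noteq> b"
        then show False using ab Jmin by (metis atLeastLessThan_iff linorder_neqE_nat)
      qed
    qed
    ultimately show ?thesis by (simp add: distinct_map)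
  qed
  have setA: "set ds \<subseteq> A" using fA by (auto simp: ds_def)
  have dist: "distinct ds" using dist_ta by (simp add: distinct_map)
  have dist_fst: "distinct (map fst ds)"
    using dist inj_fst_arcs[OF rvA] setA by (simp add: distinct_map inj_on_subset)
  have cl: "\<forall>t<length ds. he (ds ! t) = ta (ds ! ((t + 1) mod length ds))"
  proof (intro allI impI)
    fix t assume t: "t < length ds"
    have "he (ds ! t) = ta (f (i + t + 1))" using t len nth fA s fS by simp
    show "he (ds ! t) = ta (ds ! ((t + 1) mod length ds))"
    proof (cases "t + 1 < length ds")
      case True
      then show ?thesis using \<open>he (ds ! t) = ta (f (i + t + 1))\<close> nth len by simp
    next
      case False
      then have "t + 1 = length ds" using t by simp
      then have "i + t + 1 = J" using len i by simp
      then have "he (ds ! t) = g i" using \<open>he (ds ! t) = ta (f (i + t + 1))\<close> i by (simp add: g_def)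
      moreover have "ds ! 0 = f i" using nth[of 0] i by simp
      ultimately show ?thesis using \<open>t + 1 = length ds\<close> by (simp add: g_def)
    qed
  qed
  have "is_circuit E src tgt (set ds)"
    unfolding is_circuit_def
    using i len dist_fst dist_ta cl setA sub by (intro exI[of _ ds]) auto
  then show ?thesis using setA by blast
qed

definition pos :: "('e \<Rightarrow> real) \<Rightarrow> ('e \<times> bool) set" where
  "pos y = {d \<in> E \<times> UNIV. oval y d > 0}"

lemma sum_neg_pos: "finite S \<Longrightarrow> x \<in> S \<Longrightarrow> f x < 0 \<Longrightarrow> sum f S = (0::real) \<Longrightarrow> \<exists>x'\<in>S. f x' > 0"
proof (rule ccontr)
  assume h: "finite S" "x \<in> S" "f x < 0" "sum f S = 0" "\<not> (\<exists>x'\<in>S. f x' > 0)"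
  have "sum f S = f x + sum f (S - {x})" using h by (simp add: sum.remove)
  moreover have "sum f (S - {x}) \<le> 0" using h(5) by (intro sum_nonpos) (simp add: not_less)
  ultimately show False using h by linarith
qed

lemma decomp:
  assumes "y \<in> H"
  shows "\<exists>L. (\<forall>p\<in>set L. fst p > 0 \<and> is_circuit E src tgt (snd p) \<and> snd p \<subseteq> pos y) \<and>
             y = (\<lambda>e. \<Sum>p\<leftarrow>L. fst p * circ_chain (snd p) e)"
  using assms
proof (induction "card {e\<in>E. y e \<noteq> 0}" arbitrary: y rule: less_induct)
  case less
  have yH: "y \<in> H" by fact
  show ?case
  proof (cases "{e\<in>E. y e \<noteq> 0} = {}")
    case True
    then have "y = (\<lambda>e. 0)" using yH by (auto simp: flow_iff)
    then show ?thesis by (intro exI[of _ "[]"]) auto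
  next
    case False
    then obtain e0 where e0: "e0 \<in> E" "y e0 \<noteq> 0" by blast
    let ?A = "pos y"
    have finA: "finite ?A" unfolding pos_def using finE by (auto intro: finite_subset[of _ "E \<times> UNIV"])
    have "(e0, y e0 > 0) \<in> ?A" using e0 by (auto simp: pos_def oval_def)
    then have neA: "?A \<noteq> {}" by blast
    have subA: "?A \<subseteq> E \<times> UNIV" by (auto simp: pos_def)
    have rvA: "\<forall>d\<in>?A. rv d \<notin> ?A" by (auto simp: pos_def)
    have succ: "\<forall>d\<in>?A. \<exists>d'\<in>?A. ta d' = he d"
    proof
      fix d assume d: "d \<in> ?A"
      then have fe: "fst d \<in> E" by (auto simp: pos_def)
      have "he d \<in> V" using he_V fe by simp
      then have sum0: "(\<Sum>d'\<in>Out (he d). oval y d') = 0" using yH by (simp add: flow_iff)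
      have "rv d \<in> Out (he d)" using fe by (auto simp: Out_def mem_Times_iff)
      moreover have "oval y (rv d) < 0" using d by (simp add: pos_def)
      ultimately obtain d' where "d' \<in> Out (he d)" "oval y d' > 0" using sum_neg_pos[OF finite_Out _ _ sum0] by blast
      then show "\<exists>d'\<in>?A. ta d' = he d" by (auto simp: Out_def pos_def)
    qed
    obtain C where C: "is_circuit E src tgt C" "C \<subseteq> ?A" using find_circuit[OF finA neA subA rvA succ] by blast
    have finC: "finite C" and neC: "C \<noteq> {}" using C(1) by (auto elim!: circuitE)
    define \<alpha> where "\<alpha> = Min (oval y ` C)"
    have \<alpha>pos: "\<alpha> > 0" unfolding \<alpha>_def using finC neC C(2) by (auto simp: pos_def)
    obtain dm where dm: "dm \<in> C" "oval y dm = \<alpha>" unfolding \<alpha>_def using finC neC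
      by (metis (mono_tags, lifting) Min_in empty_is_image finite_imageI imageE)
    have \<alpha>le: "d \<in> C \<Longrightarrow> \<alpha> \<le> oval y d" for d unfolding \<alpha>_def using finC by simp
    define y' where "y' = (\<lambda>e. y e - \<alpha> * circ_chain C e)"
    have y'H: "y' \<in> H" unfolding y'_def using flow_diff[OF yH flow_scale[OF circ_flow[OF C(1)]]] .
    have rvC: "\<forall>d\<in>C. rv d \<notin> C" using circuit_rv[OF C(1)] by blast
    have ov: "oval y' d = oval y d - \<alpha> * (of_bool (d \<in> C) - of_bool (rv d \<in> C))" for d
      unfolding y'_def oval_diff oval_scale oval_circ[OF rvC] ..
    have posy': "pos y' \<subseteq> pos y"
    proof
      fix d assume d: "d \<in> pos y'"
      show "d \<in> pos y"
      proof (cases "d \<in> C")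
        case True then show ?thesis using C(2) by auto
      next
        case False
        show ?thesis
        proof (cases "rv d \<in> C")
          case True
          then have "\<alpha> \<le> oval y (rv d)" using \<alpha>le by blast
          then have "oval y' d \<le> 0" using ov[of d] True rvC by auto
          then show ?thesis using d by (simp add: pos_def)
        next
          case False
          then show ?thesis using d ov[of d] \<open>d \<notin> C\<close> by (simp add: pos_def)
        qed
      qed
    qed
    have supp: "{e\<in>E. y' e \<noteq> 0} \<subset> {e\<in>E. y e \<noteq> 0}"
    proof
      show "{e\<in>E. y' e \<noteq> 0} \<subseteq> {e\<in>E. y e \<noteq> 0}"
      proof
        fix e assume e: "e \<in> {e\<in>E. y' e \<noteq> 0}"
        show "e \<in> {e\<in>E. y e \<noteq> 0}"
        proof (rule ccontr)
          assume "e \<notin> {e\<in>E. y e \<noteq> 0}"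
          then have "y e = 0" using e by auto
          then have "(e,True) \<notin> pos y" "(e,False) \<notin> pos y" by (auto simp: pos_def oval_def)
          then have "(e,True) \<notin> C" "(e,False) \<notin> C" using C(2) by auto
          then have "circ_chain C e = 0" by (simp add: circ_chain_def)
          then show False using e \<open>y e = 0\<close> by (simp add: y'_def)
        qed
      qed
      have "oval y' dm = 0" using ov[of dm] dm rvC by auto
      then have "y' (fst dm) = 0" by (auto simp: oval_def split: if_splits)
      moreover have "y (fst dm) \<noteq> 0" using dm \<alpha>pos by (auto simp: oval_def split: if_splits)
      moreover have "fst dm \<in> E" using dm C(2) by (auto simp: pos_def)
      ultimately show "{e\<in>E. y' e \<noteq> 0} \<noteq> {e\<in>E. y e \<noteq> 0}" by blast
    qed
    have "card {e\<in>E. y' e \<noteq> 0} < card {e\<in>E. y e \<noteq> 0}"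
      using supp finE by (simp add: psubset_card_mono)
    from less(1)[OF this y'H] obtain L where L:
      "\<forall>p\<in>set L. fst p > 0 \<and> is_circuit E src tgt (snd p) \<and> snd p \<subseteq> pos y'"
      "y' = (\<lambda>e. \<Sum>p\<leftarrow>L. fst p * circ_chain (snd p) e)" by blast
    show ?thesis
    proof (intro exI[of _ "(\<alpha>, C) # L"] conjI)
      show "\<forall>p\<in>set ((\<alpha>, C) # L). fst p > 0 \<and> is_circuit E src tgt (snd p) \<and> snd p \<subseteq> pos y"
        using L(1) \<alpha>pos C posy' by auto
      show "y = (\<lambda>e. \<Sum>p\<leftarrow>(\<alpha>, C) # L. fst p * circ_chain (snd p) e)"
      proof
        fix e
        have "y' e = (\<Sum>p\<leftarrow>L. fst p * circ_chain (snd p) e)" using L(2) by metis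
        then show "y e = (\<Sum>p\<leftarrow>(\<alpha>, C) # L. fst p * circ_chain (snd p) e)" by (simp add: y'_def)
      qed
    qed
  qed
qed


fun ipath :: "'v \<Rightarrow> ('e \<times> bool) list \<Rightarrow> 'v \<Rightarrow> bool" where
  "ipath x [] y = (x = y)"
| "ipath x (d # ds) y = (ta d = x \<and> ipath (he d) ds y)"

lemma ipath_append: "ipath x (ds1 @ ds2) z \<longleftrightarrow> (\<exists>y. ipath x ds1 y \<and> ipath y ds2 z)"
  by (induction ds1 arbitrary: x) auto

lemma ipath_snoc: "ipath x (ds @ [d]) z \<longleftrightarrow> ipath x ds (ta d) \<and> he d = z"
  by (simp add: ipath_append)

lemma ipath_take: "ipath x ds y \<Longrightarrow> k < length ds \<Longrightarrow> ipath x (take k ds) (ta (ds ! k))"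
proof (induction ds arbitrary: x k)
  case Nil then show ?case by simp
next
  case (Cons d ds) then show ?case by (cases k) auto
qed

lemma ipath_he: "ipath x ds y \<Longrightarrow> i < length ds \<Longrightarrow> he (ds ! i) = (if Suc i < length ds then ta (ds ! Suc i) else y)"
proof (induction ds arbitrary: x i)
  case Nil then show ?case by simp
next
  case (Cons d ds)
  show ?case
  proof (cases i)
    case 0 then show ?thesis using Cons by (cases ds) auto
  next
    case (Suc j) then show ?thesis using Cons by auto
  qed
qed

lemma ipath_hd: "ipath x ds y \<Longrightarrow> ds \<noteq> [] \<Longrightarrow> ta (ds ! 0) = x"
  by (cases ds) auto

lemma simple_path:
  assumes "(x, y) \<in> (darcs src tgt A)\<^sup>*"
  shows "\<exists>ds. ipath x ds y \<and> set ds \<subseteq> A \<and> distinct (map ta ds) \<and> y \<notin> ta ` set ds"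
  using assms
proof (induction rule: rtrancl_induct)
  case base
  then show ?case by (intro exI[of _ "[]"]) auto
next
  case (step y z)
  obtain ds where ds: "ipath x ds y" "set ds \<subseteq> A" "distinct (map ta ds)" "y \<notin> ta ` set ds" using step.IH by blast
  obtain d where d: "d \<in> A" "ta d = y" "he d = z" using step.hyps(2) unfolding darcs_def by blast
  show ?case
  proof (cases "z \<in> ta ` set ds")
    case True
    then obtain k where k: "k < length ds" "z = ta (ds ! k)" by (metis imageE in_set_conv_nth)
    have p: "ipath x (take k ds) z" using ipath_take[OF ds(1) k(1)] k(2) by simp
    have dt: "distinct (map ta (take k ds))" using ds(3) by (simp add: take_map[symmetric])
    have nz: "z \<notin> ta ` set (take k ds)"
    proof
      assume "z \<in> ta ` set (take k ds)"
      then obtain i where i: "i < k" "z = ta (take k ds ! i)" using k(1)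
        by (metis imageE in_set_conv_nth length_take min.absorb4 order.strict_implies_order)
      then have "i = k" using dmap_inj[OF ds(3), of i k] k i by simp
      then show False using i by simp
    qed
    show ?thesis using p dt nz ds(2) by (intro exI[of _ "take k ds"]) (auto dest: in_set_takeD)
  next
    case False
    show ?thesis
    proof (cases "z = y")
      case True then show ?thesis using ds by blast
    next
      case zy: False
      have "ipath x (ds @ [d]) z" using ds(1) d by (simp add: ipath_snoc)
      moreover have "distinct (map ta (ds @ [d]))" using ds(3,4) d by auto
      moreover have "z \<notin> ta ` set (ds @ [d])" using False zy d by auto
      ultimately show ?thesis using ds(2) d by (intro exI[of _ "ds @ [d]"]) auto
    qed
  qed
qed

lemma simple_distinct_fst:
  assumes p: "ipath x ds y" and dt: "distinct (map ta ds)" and ny: "y \<notin> ta ` set ds"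
  shows "distinct (map fst ds)"
proof -
  have "\<not> (i < j \<and> j < length ds \<and> fst (ds ! i) = fst (ds ! j))" for i j
  proof
    assume h: "i < j \<and> j < length ds \<and> fst (ds ! i) = fst (ds ! j)"
    have neq: "ds ! i \<noteq> ds ! j"
    proof
      assume "ds ! i = ds ! j"
      then show False using dmap_inj[OF dt, of i j] h by simp
    qed
    then have rj: "ds ! j = rv (ds ! i)" using h
      by (cases "ds ! i"; cases "ds ! j") (auto simp: rv_def)
    have "he (ds ! i) = ta (ds ! Suc i)" using ipath_he[OF p, of i] h by auto
    then have "ta (ds ! j) = ta (ds ! Suc i)" using rj by simp
    then have j: "j = Suc i" using dmap_inj[OF dt, of j "Suc i"] h by simp
    have "he (ds ! j) = ta (ds ! i)" using rj by simp
    show False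
    proof (cases "Suc j < length ds")
      case True
      then have "ta (ds ! Suc j) = ta (ds ! i)" using ipath_he[OF p, of j] h \<open>he (ds ! j) = ta (ds ! i)\<close> by simp
      then have "Suc j = i" using dmap_inj[OF dt, of "Suc j" i] True h by simp
      then show False using j by simp
    next
      case False
      then have "y = ta (ds ! i)" using ipath_he[OF p, of j] h \<open>he (ds ! j) = ta (ds ! i)\<close> by simp
      then show False using ny h by auto
    qed
  qed
  then show ?thesis unfolding distinct_conv_nth
    by (metis length_map linorder_neqE_nat nth_map)
qed

lemma closed_path_circuit:
  assumes p: "ipath x cs x" and ne: "cs \<noteq> []" and dt: "distinct (map ta cs)" and df: "distinct (map fst cs)"
    and E: "\<forall>d\<in>set cs. fst d \<in> E"
  shows "is_circuit E src tgt (set cs)"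
proof -
  have "\<forall>i<length cs. he (cs ! i) = ta (cs ! ((i + 1) mod length cs))"
  proof (intro allI impI)
    fix i assume i: "i < length cs"
    show "he (cs ! i) = ta (cs ! ((i + 1) mod length cs))"
    proof (cases "Suc i < length cs")
      case True then show ?thesis using ipath_he[OF p i] by simp
    next
      case False
      then have "Suc i = length cs" using i by simp
      then show ?thesis using ipath_he[OF p i] ipath_hd[OF p ne] by simp
    qed
  qed
  then show ?thesis unfolding is_circuit_def using ne dt df E by blast
qed


abbreviation "BL \<equiv> bridgeless_edges E src tgt"

lemma BL_E: "BL \<subseteq> E" by (auto simp: bridgeless_edges_def)

lemma darcs_mono: "D \<subseteq> D' \<Longrightarrow> darcs s t D \<subseteq> darcs s t D'"
  unfolding darcs_def by blast

lemma darcs_arc: "d \<in> D \<Longrightarrow> (otail s t d, ohead s t d) \<in> darcs s t D"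
  unfolding darcs_def by blast

definition pinv :: "('e \<times> bool) set \<Rightarrow> bool" where
  "pinv D \<longleftrightarrow> D \<subseteq> BL \<times> UNIV \<and> (\<forall>d\<in>D. rv d \<notin> D) \<and> (\<forall>d\<in>D. (he d, ta d) \<in> (darcs src tgt D)\<^sup>*)"

lemma arc_cases: "d = (fst d, True) \<or> d = (fst d, False)"
  by (cases d; cases "snd d") auto

lemma extend_one:
  assumes inv: "pinv D" and e: "e \<in> BL" and nT: "(e, True) \<notin> D" and nF: "(e, False) \<notin> D"
  shows "\<exists>D'. pinv D' \<and> D \<subseteq> D' \<and> (e, True) \<in> D'"
proof -
  let ?a = "src e" and ?b = "tgt e"
  have eE: "e \<in> E" using e BL_E by blast
  have "(?a, ?b) \<in> (adj src tgt (E - {e}))\<^sup>*" using e by (simp add: bridgeless_edges_def is_bridge_def)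
  then have "(?b, ?a) \<in> (darcs src tgt ((E - {e}) \<times> UNIV))\<^sup>*" using adj_sym adj_eq_darcs by metis
  then obtain ds where ds: "ipath ?b ds ?a" "set ds \<subseteq> (E - {e}) \<times> UNIV" "distinct (map ta ds)" "?a \<notin> ta ` set ds"
    using simple_path by blast
  have dfs: "distinct (map fst ds)" using simple_distinct_fst[OF ds(1,3,4)] .
  define cs where "cs = (e, True) # ds"
  have tae: "ta (e, True) = ?a" "he (e, True) = ?b" by (simp_all add: otail_def ohead_def)
  have pc: "ipath ?a cs ?a" using ds(1) tae by (simp add: cs_def)
  have "is_circuit E src tgt (set cs)"
  proof (rule closed_path_circuit[OF pc])
    show "cs \<noteq> []" by (simp add: cs_def)
    show "distinct (map ta cs)" using ds(3,4) tae by (simp add: cs_def)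
    show "distinct (map fst cs)" using dfs ds(2) by (auto simp: cs_def)
    show "\<forall>d\<in>set cs. fst d \<in> E" using ds(2) eE by (auto simp: cs_def)
  qed
  then have circ: "is_circuit E src tgt (set cs)" .
  define N where "N = {d \<in> set cs. (fst d, True) \<notin> D \<and> (fst d, False) \<notin> D}"
  define D' where "D' = D \<union> N"
  have eN: "(e, True) \<in> N" using nT nF by (simp add: N_def cs_def)
  have DD': "D \<subseteq> D'" by (simp add: D'_def)
  have inv1: "D \<subseteq> BL \<times> UNIV" "\<forall>d\<in>D. rv d \<notin> D" "\<forall>d\<in>D. (he d, ta d) \<in> (darcs src tgt D)\<^sup>*"
    using inv by (auto simp: pinv_def)
  have sub': "D' \<subseteq> BL \<times> UNIV"
  proof -
    have "N \<subseteq> BL \<times> UNIV"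
    proof
      fix d assume "d \<in> N"
      then have "d \<in> set cs" by (simp add: N_def)
      then have "fst d \<in> BL" using circuit_not_bridge[OF circ] by blast
      then show "d \<in> BL \<times> UNIV" by (cases d) auto
    qed
    then show ?thesis using inv1(1) by (simp add: D'_def)
  qed
  have rv': "\<forall>d\<in>D'. rv d \<notin> D'"
  proof
    fix d assume d: "d \<in> D'"
    show "rv d \<notin> D'"
    proof
      assume r: "rv d \<in> D'"
      consider "d \<in> D" "rv d \<in> D" | "d \<in> D" "rv d \<in> N" | "d \<in> N" "rv d \<in> D" | "d \<in> N" "rv d \<in> N"
        using d r by (auto simp: D'_def)
      then show False
      proof cases
        case 1 then show ?thesis using inv1(2) by blast
      next
        case 2 then show ?thesis using arc_cases[of d] by (auto simp: N_def)
      next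
        case 3 then show ?thesis using arc_cases[of "rv d"] by (auto simp: N_def)
      next
        case 4 then show ?thesis using circuit_rv[OF circ] by (auto simp: N_def)
      qed
    qed
  qed
  have arcs_cs: "(ta d', he d') \<in> (darcs src tgt D')\<^sup>*" if "d' \<in> set cs" for d'
  proof (cases "d' \<in> N")
    case True then show ?thesis by (auto simp: D'_def intro!: darcs_arc)
  next
    case False
    then have "(fst d', True) \<in> D \<or> (fst d', False) \<in> D" using that by (simp add: N_def)
    then have "d' \<in> D \<or> rv d' \<in> D" by (cases d'; cases "snd d'") (auto simp: rv_def)
    then show ?thesis
    proof
      assume "d' \<in> D" then show ?thesis by (auto simp: D'_def intro!: darcs_arc)
    next
      assume "rv d' \<in> D"
      then have "(ta d', he d') \<in> (darcs src tgt D)\<^sup>*" using inv1(3) by fastforce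
      then show ?thesis using rtrancl_mono[OF darcs_mono[OF DD']] by blast
    qed
  qed
  have cyc': "\<forall>d\<in>D'. (he d, ta d) \<in> (darcs src tgt D')\<^sup>*"
  proof
    fix d assume d: "d \<in> D'"
    show "(he d, ta d) \<in> (darcs src tgt D')\<^sup>*"
    proof (cases "d \<in> D")
      case True
      then show ?thesis using inv1(3) rtrancl_mono[OF darcs_mono[OF DD']] by blast
    next
      case False
      then have "d \<in> set cs" using d by (simp add: D'_def N_def)
      then have "(he d, ta d) \<in> ((darcs src tgt D')\<^sup>*)\<^sup>*"
        by (rule circuit_reach[OF circ]) (use arcs_cs in blast)
      then show ?thesis by simp
    qed
  qed
  show ?thesis using sub' rv' cyc' eN DD' by (intro exI[of _ D']) (auto simp: pinv_def D'_def)
qed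

lemma extend_all:
  assumes "pinv D"
  shows "\<exists>D'. pinv D' \<and> D \<subseteq> D' \<and> (\<forall>e\<in>BL. (e, True) \<in> D' \<or> (e, False) \<in> D')"
  using assms
proof (induction "card {e\<in>BL. (e, True) \<notin> D \<and> (e, False) \<notin> D}" arbitrary: D rule: less_induct)
  case less
  show ?case
  proof (cases "\<forall>e\<in>BL. (e, True) \<in> D \<or> (e, False) \<in> D")
    case True then show ?thesis using less.prems by blast
  next
    case False
    then obtain e where e: "e \<in> BL" "(e, True) \<notin> D" "(e, False) \<notin> D" by blast
    obtain D1 where D1: "pinv D1" "D \<subseteq> D1" "(e, True) \<in> D1" using extend_one[OF less.prems e] by blast
    have "{e\<in>BL. (e, True) \<notin> D1 \<and> (e, False) \<notin> D1} \<subset> {e\<in>BL. (e, True) \<notin> D \<and> (e, False) \<notin> D}"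
      using D1 e by blast
    moreover have "finite {e\<in>BL. (e, True) \<notin> D \<and> (e, False) \<notin> D}"
      using finE BL_E by (auto intro: finite_subset)
    ultimately have "card {e\<in>BL. (e, True) \<notin> D1 \<and> (e, False) \<notin> D1} < card {e\<in>BL. (e, True) \<notin> D \<and> (e, False) \<notin> D}"
      by (simp add: psubset_card_mono)
    from less.hyps[OF this D1(1)] obtain D' where "pinv D'" "D1 \<subseteq> D'" "\<forall>e\<in>BL. (e, True) \<in> D' \<or> (e, False) \<in> D'" by blast
    then show ?thesis using D1(2) by blast
  qed
qed

lemma pinv_sc:
  assumes inv: "pinv D" and full: "\<forall>e\<in>BL. (e, True) \<in> D \<or> (e, False) \<in> D"
  shows "strongly_connected_orientation V BL src tgt D"
proof -
  have or: "is_orientation BL D"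
    unfolding is_orientation_def using inv full by (auto simp: pinv_def rv_def)
  have cyc: "\<forall>d\<in>D. (he d, ta d) \<in> (darcs src tgt D)\<^sup>*" using inv by (simp add: pinv_def)
  have "adj src tgt BL \<subseteq> (darcs src tgt D)\<^sup>*"
  proof
    fix p assume "p \<in> adj src tgt BL"
    then obtain e where e: "e \<in> BL" "p = (src e, tgt e) \<or> p = (tgt e, src e)" unfolding adj_def by blast
    have tT: "ta (e, True) = src e" "he (e, True) = tgt e" "ta (e, False) = tgt e" "he (e, False) = src e"
      by (simp_all add: otail_def ohead_def)
    have "(src e, tgt e) \<in> (darcs src tgt D)\<^sup>* \<and> (tgt e, src e) \<in> (darcs src tgt D)\<^sup>*"
    proof (cases "(e, True) \<in> D")
      case True
      have "(ta (e, True), he (e, True)) \<in> darcs src tgt D" using darcs_arc[OF True] .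
      moreover have "(he (e, True), ta (e, True)) \<in> (darcs src tgt D)\<^sup>*" using cyc True by blast
      ultimately show ?thesis unfolding tT by blast
    next
      case False
      then have F: "(e, False) \<in> D" using full e by blast
      have "(ta (e, False), he (e, False)) \<in> darcs src tgt D" using darcs_arc[OF F] .
      moreover have "(he (e, False), ta (e, False)) \<in> (darcs src tgt D)\<^sup>*" using cyc F by blast
      ultimately show ?thesis unfolding tT by blast
    qed
    then show "p \<in> (darcs src tgt D)\<^sup>*" using e by blast
  qed
  then have "(adj src tgt BL)\<^sup>* \<subseteq> (darcs src tgt D)\<^sup>*" by (metis rtrancl_subset_rtrancl)
  then show ?thesis unfolding strongly_connected_orientation_def using or by blast
qed

lemma sc_pinv:
  assumes sc: "strongly_connected_orientation V BL src tgt D"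
  shows "pinv D"
proof -
  have or: "is_orientation BL D" using sc by (simp add: strongly_connected_orientation_def)
  then have sub: "D \<subseteq> BL \<times> UNIV" by (simp add: is_orientation_def)
  have rv: "\<forall>d\<in>D. rv d \<notin> D"
  proof
    fix d assume d: "d \<in> D"
    then have "fst d \<in> BL" using sub by auto
    then have "((fst d, True) \<in> D) \<noteq> ((fst d, False) \<in> D)" using or by (simp add: is_orientation_def)
    then show "rv d \<notin> D" using d by (cases d; cases "snd d") (auto simp: rv_def)
  qed
  have "(he d, ta d) \<in> (darcs src tgt D)\<^sup>*" if d: "d \<in> D" for d
  proof -
    have fd: "fst d \<in> BL" using sub d by auto
    then have fE: "fst d \<in> E" using BL_E by blast
    have "(ta d, he d) \<in> adj src tgt BL" using adj_arc[OF fd] .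
    then have "(he d, ta d) \<in> (adj src tgt BL)\<^sup>*" using adj_sym by (meson r_into_rtrancl)
    then show ?thesis using sc ta_V[OF fE] he_V[OF fE] unfolding strongly_connected_orientation_def by blast
  qed
  then show ?thesis using sub rv by (simp add: pinv_def)
qed

lemma sc_full: "strongly_connected_orientation V BL src tgt D \<Longrightarrow> \<forall>e\<in>BL. (e, True) \<in> D \<or> (e, False) \<in> D"
  unfolding strongly_connected_orientation_def is_orientation_def by blast


lemma inner_ch_zero_right[simp]: "inner_ch E' z (\<lambda>e. 0) = 0"
  by (simp add: inner_ch_def)

lemma proj_exists:
  assumes "\<forall>b\<in>set bs. b \<in> H"
  shows "\<exists>p. p \<in> H \<and> (\<forall>b\<in>set bs. inner_ch E (\<lambda>e. w e - p e) b = 0) \<and>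
               (\<forall>z. (\<forall>b\<in>set bs. inner_ch E z b = 0) \<longrightarrow> inner_ch E z p = 0)"
  using assms
proof (induction bs arbitrary: w)
  case Nil
  then show ?case using flow_zero by (intro exI[of _ "\<lambda>e. 0"]) auto
next
  case (Cons b bs)
  have bH: "b \<in> H" and bsH: "\<forall>b\<in>set bs. b \<in> H" using Cons.prems by auto
  obtain pb where pb: "pb \<in> H" "\<forall>h\<in>set bs. inner_ch E (\<lambda>e. b e - pb e) h = 0"
    "\<forall>z. (\<forall>h\<in>set bs. inner_ch E z h = 0) \<longrightarrow> inner_ch E z pb = 0"
    using Cons.IH[OF bsH] by blast
  obtain p' where p': "p' \<in> H" "\<forall>h\<in>set bs. inner_ch E (\<lambda>e. w e - p' e) h = 0"
    "\<forall>z. (\<forall>h\<in>set bs. inner_ch E z h = 0) \<longrightarrow> inner_ch E z p' = 0"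
    using Cons.IH[OF bsH] by blast
  define b' where "b' = (\<lambda>e. b e - pb e)"
  have b'H: "b' \<in> H" unfolding b'_def using flow_diff[OF bH pb(1)] .
  have b'orth: "\<forall>h\<in>set bs. inner_ch E b' h = 0" using pb(2) by (simp add: b'_def)
  have wp'pb: "inner_ch E (\<lambda>e. w e - p' e) pb = 0" using pb(3) p'(2) by blast
  have b'pb: "inner_ch E b' pb = 0" using pb(3) b'orth by blast
  have wb: "inner_ch E (\<lambda>e. w e - p' e) b = inner_ch E (\<lambda>e. w e - p' e) b'"
  proof -
    have "b = (\<lambda>e. b' e + pb e)" by (simp add: b'_def)
    then have "inner_ch E (\<lambda>e. w e - p' e) b = inner_ch E (\<lambda>e. w e - p' e) b' + inner_ch E (\<lambda>e. w e - p' e) pb"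
      by (metis inner_ch_add_right)
    then show ?thesis using wp'pb by simp
  qed
  have b'b: "inner_ch E b' b = qf E b'"
  proof -
    have "b = (\<lambda>e. b' e + pb e)" by (simp add: b'_def)
    then have "inner_ch E b' b = inner_ch E b' b' + inner_ch E b' pb" by (metis inner_ch_add_right)
    then show ?thesis using b'pb by (simp add: qf_def)
  qed
  show ?case
  proof (cases "qf E b' = 0")
    case True
    then have "\<forall>e\<in>E. b' e = 0" using qf_zero_iff[OF finE] by blast
    then have "inner_ch E (\<lambda>e. w e - p' e) b' = 0" by (simp add: inner_ch_def)
    then have "inner_ch E (\<lambda>e. w e - p' e) b = 0" using wb by simp
    then show ?thesis using p' by (intro exI[of _ p']) auto
  next
    case False
    define c where "c = inner_ch E (\<lambda>e. w e - p' e) b' / qf E b'"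
    define p where "p = (\<lambda>e. p' e + c * b' e)"
    have pH: "p \<in> H" unfolding p_def using flow_add[OF p'(1) flow_scale[OF b'H]] .
    have wp: "(\<lambda>e. w e - p e) = (\<lambda>e. (w e - p' e) - c * b' e)" by (auto simp: p_def)
    have ip: "inner_ch E (\<lambda>e. w e - p e) h = inner_ch E (\<lambda>e. w e - p' e) h - c * inner_ch E b' h" for h
      unfolding wp inner_ch_diff_left inner_ch_scale_left ..
    have 1: "\<forall>h\<in>set (b # bs). inner_ch E (\<lambda>e. w e - p e) h = 0"
    proof
      fix h assume "h \<in> set (b # bs)"
      then consider "h = b" | "h \<in> set bs" by auto
      then show "inner_ch E (\<lambda>e. w e - p e) h = 0"
      proof cases
        case 1
        then show ?thesis using ip[of b] wb b'b False by (simp add: c_def)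
      next
        case 2
        then show ?thesis using ip[of h] p'(2) b'orth by simp
      qed
    qed
    have 2: "\<forall>z. (\<forall>h\<in>set (b # bs). inner_ch E z h = 0) \<longrightarrow> inner_ch E z p = 0"
    proof (intro allI impI)
      fix z assume z: "\<forall>h\<in>set (b # bs). inner_ch E z h = 0"
      have "inner_ch E z p = inner_ch E z p' + c * (inner_ch E z b - inner_ch E z pb)"
        unfolding p_def inner_ch_add_right inner_ch_scale_right b'_def inner_ch_diff_right ..
      then show "inner_ch E z p = 0" using z p'(3) pb(3) by simp
    qed
    show ?thesis using pH 1 2 by blast
  qed
qed

lemma finite_circuits: "finite {C. is_circuit E src tgt C}"
proof -
  have "{C. is_circuit E src tgt C} \<subseteq> Pow (E \<times> UNIV)" using circuit_sub by blast
  moreover have "finite (Pow (E \<times> (UNIV :: bool set)))" using finE by simp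
  ultimately show ?thesis by (rule finite_subset)
qed

lemma inner_ch_sum_list_right:
  "inner_ch E z (\<lambda>e. \<Sum>p\<leftarrow>L. f p e) = (\<Sum>p\<leftarrow>L. inner_ch E z (f p))"
  by (induction L) (simp_all add: inner_ch_add_right)

lemma orth_H:
  assumes z: "\<forall>C. is_circuit E src tgt C \<longrightarrow> inner_ch E z (circ_chain C) = 0" and y: "y \<in> H"
  shows "inner_ch E z y = 0"
proof -
  obtain L where L: "\<forall>p\<in>set L. fst p > 0 \<and> is_circuit E src tgt (snd p) \<and> snd p \<subseteq> pos y"
    "y = (\<lambda>e. \<Sum>p\<leftarrow>L. fst p * circ_chain (snd p) e)" using decomp[OF y] by blast
  have "inner_ch E z y = (\<Sum>p\<leftarrow>L. inner_ch E z (\<lambda>e. fst p * circ_chain (snd p) e))"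
    by (subst L(2)) (rule inner_ch_sum_list_right)
  also have "\<dots> = (\<Sum>p\<leftarrow>L. 0)"
    by (rule arg_cong[where f=sum_list], rule map_cong, simp)
       (use L(1) z in \<open>auto simp: inner_ch_scale_right\<close>)
  finally show ?thesis by simp
qed

lemma proj_H: "\<exists>p\<in>H. \<forall>y\<in>H. inner_ch E (\<lambda>e. w e - p e) y = 0"
proof -
  obtain cl where cl: "set cl = circ_chain ` {C. is_circuit E src tgt C}"
    using finite_circuits by (metis finite_imageI finite_list)
  have "\<forall>b\<in>set cl. b \<in> H" using cl circ_flow by auto
  then obtain p where p: "p \<in> H" "\<forall>b\<in>set cl. inner_ch E (\<lambda>e. w e - p e) b = 0"
    using proj_exists by blast
  have "\<forall>C. is_circuit E src tgt C \<longrightarrow> inner_ch E (\<lambda>e. w e - p e) (circ_chain C) = 0"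
    using p(2) cl by auto
  then show ?thesis using p(1) orth_H by blast
qed


lemma oval_sum_list: "oval (\<lambda>e. \<Sum>p\<leftarrow>L. f p e) d = (\<Sum>p\<leftarrow>L. oval (f p) d)"
  by (induction L) (simp_all add: oval_add)

lemma pos_in_circuit:
  assumes y: "y \<in> H" and d: "d \<in> pos y"
  shows "\<exists>C. is_circuit E src tgt C \<and> C \<subseteq> pos y \<and> d \<in> C"
proof (rule ccontr)
  assume nex: "\<not> ?thesis"
  obtain L where L: "\<forall>p\<in>set L. fst p > 0 \<and> is_circuit E src tgt (snd p) \<and> snd p \<subseteq> pos y"
    "y = (\<lambda>e. \<Sum>p\<leftarrow>L. fst p * circ_chain (snd p) e)" using decomp[OF y] by blast
  have "oval y d = (\<Sum>p\<leftarrow>L. oval (\<lambda>e. fst p * circ_chain (snd p) e) d)"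
    by (subst L(2)) (rule oval_sum_list)
  also have "\<dots> = (\<Sum>p\<leftarrow>L. 0)"
  proof (rule arg_cong[where f=sum_list], rule map_cong, simp)
    fix p assume p: "p \<in> set L"
    then have c: "is_circuit E src tgt (snd p)" "snd p \<subseteq> pos y" using L(1) by auto
    have "d \<notin> snd p" using nex c by blast
    moreover have "rv d \<notin> snd p"
    proof
      assume "rv d \<in> snd p"
      then have "rv d \<in> pos y" using c(2) by blast
      then have "oval y (rv d) > 0" unfolding pos_def by blast
      then show False using d by (simp add: pos_def)
    qed
    ultimately show "oval (\<lambda>e. fst p * circ_chain (snd p) e) d = 0"
      using oval_circ[of "snd p" d] circuit_rv[OF c(1)] by (simp add: oval_scale)
  qed
  finally show False using d by (simp add: pos_def)
qed

lemma flow_BL: "y \<in> H \<Longrightarrow> e \<notin> BL \<Longrightarrow> y e = 0"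
proof (rule ccontr)
  assume h: "y \<in> H" "e \<notin> BL" "y e \<noteq> 0"
  then have eE: "e \<in> E" using h by (auto simp: flow_iff)
  have "(e, y e > 0) \<in> pos y" using eE h(3) by (auto simp: pos_def oval_def)
  then obtain C where "is_circuit E src tgt C" "(e, y e > 0) \<in> C" using pos_in_circuit[OF h(1)] by blast
  then have "e \<in> BL" using circuit_not_bridge by fastforce
  then show False using h by simp
qed

lemma sc_circuit:
  assumes sc: "strongly_connected_orientation V BL src tgt D" and d: "d \<in> D"
  shows "\<exists>C. is_circuit E src tgt C \<and> C \<subseteq> D \<and> d \<in> C"
proof -
  have inv: "pinv D" using sc_pinv[OF sc] .
  then have sub: "D \<subseteq> BL \<times> UNIV" and rvD: "\<forall>d\<in>D. rv d \<notin> D" and cyc: "(he d, ta d) \<in> (darcs src tgt D)\<^sup>*"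
    using d by (auto simp: pinv_def)
  obtain ds where ds: "ipath (he d) ds (ta d)" "set ds \<subseteq> D" "distinct (map ta ds)" "ta d \<notin> ta ` set ds"
    using simple_path[OF cyc] by blast
  define cs where "cs = d # ds"
  have pc: "ipath (ta d) cs (ta d)" using ds(1) by (simp add: cs_def)
  have dt: "distinct (map ta cs)" using ds(3,4) by (simp add: cs_def)
  have setcs: "set cs \<subseteq> D" using ds(2) d by (simp add: cs_def)
  have df: "distinct (map fst cs)"
  proof -
    have "distinct cs" using dt by (simp add: distinct_map)
    moreover have "inj_on fst (set cs)" using inj_fst_arcs[OF rvD] setcs by (rule inj_on_subset)
    ultimately show ?thesis by (simp add: distinct_map)
  qed
  have "\<forall>d\<in>set cs. fst d \<in> E"
  proof
    fix d' assume "d' \<in> set cs"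
    then have "d' \<in> BL \<times> UNIV" using setcs sub by blast
    then show "fst d' \<in> E" using BL_E by (auto simp: mem_Times_iff)
  qed
  then have "is_circuit E src tgt (set cs)" using closed_path_circuit[OF pc _ dt df] by (simp add: cs_def)
  then show ?thesis using setcs by (intro exI[of _ "set cs"]) (simp add: cs_def)
qed

lemma qf_circ_D:
  assumes c: "is_circuit E src tgt C" and CD: "C \<subseteq> D" and rvD: "\<forall>d\<in>D. rv d \<notin> D"
  shows "qf E (circ_chain C) = inner_ch E (circ_chain D) (circ_chain C)"
proof -
  have "circ_chain C e * circ_chain C e = circ_chain D e * circ_chain C e" for e
  proof -
    have "(e, True) \<in> C \<Longrightarrow> (e, False) \<notin> C" using circuit_rv[OF c, of "(e,True)"] by (simp add: rv_def)
    moreover have "(e, False) \<in> D \<Longrightarrow> (e, True) \<notin> D" using rvD by (force simp: rv_def)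
    ultimately show ?thesis using CD by (auto simp: circ_chain_def)
  qed
  then show ?thesis unfolding qf_def inner_ch_def by (rule sum.cong[OF refl])
qed

lemma H_zero:
  assumes sc: "strongly_connected_orientation V BL src tgt D" and z: "z \<in> H"
    and orth: "\<forall>C. is_circuit E src tgt C \<and> C \<subseteq> D \<longrightarrow> inner_ch E z (circ_chain C) = 0"
  shows "z = (\<lambda>e. 0)"
proof -
  have inv: "pinv D" using sc_pinv[OF sc] .
  then have sub: "D \<subseteq> BL \<times> UNIV" and rvD: "\<forall>d\<in>D. rv d \<notin> D" by (auto simp: pinv_def)
  have full: "\<forall>e\<in>BL. (e, True) \<in> D \<or> (e, False) \<in> D" using sc_full[OF sc] .
  have finCD: "finite {C. is_circuit E src tgt C \<and> C \<subseteq> D}"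
    using finite_circuits by (rule finite_subset[rotated]) auto
  obtain gl where gl: "set gl = {C. is_circuit E src tgt C \<and> C \<subseteq> D}" using finite_list[OF finCD] by blast
  define g where "g = (\<lambda>e. \<Sum>C\<leftarrow>gl. circ_chain C e)"
  have gH: "g \<in> H" unfolding g_def using gl circ_flow by (intro flow_sum_list) auto
  have zg: "inner_ch E z g = 0"
  proof -
    have "inner_ch E z g = (\<Sum>C\<leftarrow>gl. inner_ch E z (circ_chain C))" unfolding g_def by (rule inner_ch_sum_list_right)
    also have "\<dots> = (\<Sum>C\<leftarrow>gl. 0)"
      by (rule arg_cong[where f=sum_list], rule map_cong, simp) (use gl orth in auto)
    finally show ?thesis by simp
  qed
  have ovg: "oval g d \<ge> 1" if d: "d \<in> D" for d
  proof -
    have "oval g d = (\<Sum>C\<leftarrow>gl. oval (circ_chain C) d)" unfolding g_def by (rule oval_sum_list)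
    also have "\<dots> = (\<Sum>C\<leftarrow>gl. of_bool (d \<in> C))"
    proof (rule arg_cong[where f=sum_list], rule map_cong, simp)
      fix C assume "C \<in> set gl"
      then have c: "is_circuit E src tgt C" "C \<subseteq> D" using gl by auto
      have "rv d \<notin> C" using rvD d c(2) by blast
      then show "oval (circ_chain C) d = of_bool (d \<in> C)" using oval_circ[of C d] circuit_rv[OF c(1)] by simp
    qed
    finally have eq: "oval g d = (\<Sum>C\<leftarrow>gl. of_bool (d \<in> C))" .
    obtain C where C: "is_circuit E src tgt C" "C \<subseteq> D" "d \<in> C" using sc_circuit[OF sc d] by blast
    have "C \<in> set gl" using C gl by auto
    then have "(of_bool (d \<in> C) :: real) \<in> set (map (\<lambda>C. of_bool (d \<in> C)) gl)" by auto
    then have "(of_bool (d \<in> C) :: real) \<le> (\<Sum>C\<leftarrow>gl. of_bool (d \<in> C))"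
      by (rule member_le_sum_list) auto
    then show ?thesis using eq C(3) by simp
  qed
  define K where "K = 1 + (\<Sum>e\<in>E. \<bar>z e\<bar>)"
  have zK: "\<bar>z e\<bar> < K" for e
  proof (cases "e \<in> E")
    case True
    then have "\<bar>z e\<bar> \<le> (\<Sum>e\<in>E. \<bar>z e\<bar>)" using finE by (intro member_le_sum) auto
    then show ?thesis by (simp add: K_def)
  next
    case False then have "z e = 0" using z by (simp add: flow_iff)
    then show ?thesis by (simp add: K_def sum_nonneg add_pos_nonneg)
  qed
  define y where "y = (\<lambda>e. z e + K * g e)"
  have yH: "y \<in> H" unfolding y_def using flow_add[OF z flow_scale[OF gH]] .
  have posD: "pos y \<subseteq> D"
  proof
    fix d assume d: "d \<in> pos y"
    then have fE: "fst d \<in> E" and ov: "oval y d > 0" by (auto simp: pos_def)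
    show "d \<in> D"
    proof (cases "fst d \<in> BL")
      case False
      then have "y (fst d) = 0" using flow_BL[OF yH] by blast
      then show ?thesis using ov by (simp add: oval_def split: if_splits)
    next
      case True
      show ?thesis
      proof (rule ccontr)
        assume "d \<notin> D"
        then have "rv d \<in> D" using full True by (cases d; cases "snd d") (auto simp: rv_def)
        then have "oval g (rv d) \<ge> 1" using ovg by blast
        moreover have "oval z (rv d) > - K" using zK[of "fst d"] by (auto simp: oval_def rv_def)
        moreover have "oval y (rv d) = oval z (rv d) + K * oval g (rv d)" unfolding y_def oval_add oval_scale ..
        moreover have "K > 0" using zK[of "fst d"] by linarith
        ultimately have "oval y (rv d) > 0"
          by (smt (verit, ccfv_SIG) mult_le_cancel_left1)
        then show False using ov by simp
      qed
    qed
  qed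
  obtain L where L: "\<forall>p\<in>set L. fst p > 0 \<and> is_circuit E src tgt (snd p) \<and> snd p \<subseteq> pos y"
    "y = (\<lambda>e. \<Sum>p\<leftarrow>L. fst p * circ_chain (snd p) e)" using decomp[OF yH] by blast
  have zy: "inner_ch E z y = 0"
  proof -
    have "inner_ch E z y = (\<Sum>p\<leftarrow>L. inner_ch E z (\<lambda>e. fst p * circ_chain (snd p) e))"
      by (subst L(2)) (rule inner_ch_sum_list_right)
    also have "\<dots> = (\<Sum>p\<leftarrow>L. 0)"
      by (rule arg_cong[where f=sum_list], rule map_cong, simp)
         (use L(1) orth posD in \<open>auto simp: inner_ch_scale_right\<close>)
    finally show ?thesis by simp
  qed
  have "qf E z = inner_ch E z y - K * inner_ch E z g"
    unfolding y_def qf_def inner_ch_add_right inner_ch_scale_right by simp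
  then have "qf E z = 0" using zy zg by simp
  then have "\<forall>e\<in>E. z e = 0" using qf_zero_iff[OF finE] by blast
  then show ?thesis using z by (auto simp: flow_iff)
qed


end

context graph begin
abbreviation "vDD D \<equiv> vD V E src tgt D"
abbreviation "LL \<equiv> int_flows V E src tgt"

lemma vD_props:
  assumes sc: "strongly_connected_orientation V BL src tgt D"
  shows "\<exists>!v. is_vD V E src tgt D v" "is_vD V E src tgt D (vDD D)" "vDD D \<in> H"
    "\<forall>m\<in>H. 2 * inner_ch E (vDD D) m = inner_ch E (circ_chain D) m"
proof -
  have inv: "pinv D" using sc_pinv[OF sc] .
  then have rvD: "\<forall>d\<in>D. rv d \<notin> D" by (auto simp: pinv_def)
  define w where "w = (\<lambda>e. (1/2) * circ_chain D e)"
  obtain p where p: "p \<in> H" "\<forall>y\<in>H. inner_ch E (\<lambda>e. w e - p e) y = 0" using proj_H by blast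
  have pw: "2 * inner_ch E p y = inner_ch E (circ_chain D) y" if "y \<in> H" for y
  proof -
    have "inner_ch E (\<lambda>e. w e - p e) y = 0" using p(2) that by blast
    then have "inner_ch E w y - inner_ch E p y = 0" by (simp only: inner_ch_diff_left)
    moreover have "inner_ch E w y = (1/2) * inner_ch E (circ_chain D) y" unfolding w_def by (rule inner_ch_scale_left)
    ultimately show ?thesis by linarith
  qed
  have isp: "is_vD V E src tgt D p"
    unfolding is_vD_def
  proof (intro conjI allI impI)
    show "p \<in> H" by fact
    fix C assume C: "is_circuit E src tgt C \<and> C \<subseteq> D"
    have "2 * inner_ch E p (circ_chain C) = inner_ch E (circ_chain D) (circ_chain C)"
      using pw circ_flow C by blast
    also have "\<dots> = qf E (circ_chain C)" using qf_circ_D[of C D] rvD C by metis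
    finally show "2 * inner_ch E p (circ_chain C) = qf E (circ_chain C)" .
  qed
  have uniq: "v = p" if v: "is_vD V E src tgt D v" for v
  proof -
    define z where "z = (\<lambda>e. v e - p e)"
    have vH: "v \<in> H" using v by (simp add: is_vD_def)
    have zH: "z \<in> H" unfolding z_def using flow_diff[OF vH p(1)] .
    have "\<forall>C. is_circuit E src tgt C \<and> C \<subseteq> D \<longrightarrow> inner_ch E z (circ_chain C) = 0"
    proof (intro allI impI)
      fix C assume C: "is_circuit E src tgt C \<and> C \<subseteq> D"
      have "2 * inner_ch E v (circ_chain C) = qf E (circ_chain C)" "2 * inner_ch E p (circ_chain C) = qf E (circ_chain C)"
        using v isp C unfolding is_vD_def by blast+
      then show "inner_ch E z (circ_chain C) = 0" unfolding z_def inner_ch_diff_left by linarith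
    qed
    then have "z = (\<lambda>e. 0)" using H_zero[OF sc zH] by blast
    show "v = p"
    proof
      fix e have "z e = 0" using \<open>z = (\<lambda>e. 0)\<close> by simp
      then show "v e = p e" unfolding z_def by simp
    qed
  qed
  show "\<exists>!v. is_vD V E src tgt D v" using isp uniq by blast
  have eq: "vDD D = p" unfolding vD_def using isp uniq by (rule the_equality)
  show "is_vD V E src tgt D (vDD D)" unfolding eq by (rule isp)
  show "vDD D \<in> H" unfolding eq by (rule p(1))
  show "\<forall>m\<in>H. 2 * inner_ch E (vDD D) m = inner_ch E (circ_chain D) m" unfolding eq using pw by blast
qed

lemma int_le_sq: "x \<in> \<int> \<Longrightarrow> \<bar>c\<bar> \<le> 1 \<Longrightarrow> c * x \<le> x * (x::real)"
proof -
  assume x: "x \<in> \<int>" and c: "\<bar>c\<bar> \<le> 1"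
  show ?thesis
  proof (cases "x = 0")
    case True then show ?thesis by simp
  next
    case False
    obtain k where k: "x = of_int k" using x Ints_cases by blast
    then have "\<bar>x\<bar> \<ge> 1" using False by simp
    have "c * x \<le> \<bar>c\<bar> * \<bar>x\<bar>" by (metis abs_ge_self abs_mult)
    also have "\<dots> \<le> \<bar>x\<bar>" using c by (simp add: mult_left_le_one_le)
    also have "\<dots> = \<bar>x\<bar> * 1" by simp
    also have "\<dots> \<le> \<bar>x\<bar> * \<bar>x\<bar>" using \<open>\<bar>x\<bar> \<ge> 1\<close> by (intro mult_left_mono) auto
    also have "\<dots> = x * x" by (rule abs_mult_self_eq)
    finally show ?thesis .
  qed
qed

lemma lower:
  assumes sc: "strongly_connected_orientation V BL src tgt D" and m: "m \<in> LL"
  shows "qf E (vDD D) \<le> qf E (\<lambda>e. vDD D e - m e)"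
proof -
  have mH: "m \<in> H" and mZ: "\<forall>e\<in>E. m e \<in> \<int>" using m by (auto simp: int_flows_def)
  have "2 * inner_ch E (vDD D) m = inner_ch E (circ_chain D) m" using vD_props(4)[OF sc] mH by blast
  also have "\<dots> \<le> qf E m"
    unfolding inner_ch_def qf_def
    by (rule sum_mono, rule int_le_sq) (use mZ in \<open>auto simp: circ_chain_def\<close>)
  finally show ?thesis using qf_diff[of E "vDD D" m] by linarith
qed

lemma LL_add_circ: "m \<in> LL \<Longrightarrow> is_circuit E src tgt C \<Longrightarrow> (\<lambda>e. m e + circ_chain C e) \<in> LL"
proof -
  assume m: "m \<in> LL" and C: "is_circuit E src tgt C"
  have "(\<lambda>e. m e + circ_chain C e) \<in> H" using flow_add[OF _ circ_flow[OF C]] m by (simp add: int_flows_def)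
  moreover have "\<forall>e\<in>E. m e + circ_chain C e \<in> \<int>" using m by (auto simp: int_flows_def circ_chain_def)
  ultimately show ?thesis by (simp add: int_flows_def)
qed

lemma zero_LL: "(\<lambda>e. 0) \<in> LL"
  unfolding int_flows_def using flow_zero by auto

lemma sq_bound: "t * t \<le> Q \<Longrightarrow> \<bar>t\<bar> \<le> 1 + (Q::real)"
proof (cases "\<bar>t\<bar> \<le> 1")
  case True
  assume "t * t \<le> Q"
  moreover have "t * t \<ge> 0" by simp
  ultimately show ?thesis using True by linarith
next
  case False
  assume h: "t * t \<le> Q"
  have "\<bar>t\<bar> * 1 \<le> \<bar>t\<bar> * \<bar>t\<bar>" using False by (intro mult_left_mono) auto
  then have "\<bar>t\<bar> \<le> t * t" by (simp add: abs_mult_self_eq)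
  then show ?thesis using h by linarith
qed

lemma nearest:
  assumes x: "x \<in> H"
  shows "\<exists>m0\<in>LL. \<forall>m\<in>LL. qf E (\<lambda>e. x e - m0 e) \<le> qf E (\<lambda>e. x e - m e)"
proof -
  let ?Q = "qf E x"
  define S where "S = {m \<in> LL. qf E (\<lambda>e. x e - m e) \<le> ?Q}"
  define B where "B = (\<Sum>e\<in>E. \<bar>x e\<bar>) + 1 + ?Q"
  define N where "N = ceiling B"
  have "S \<subseteq> {f. \<forall>e. (e \<in> E \<longrightarrow> f e \<in> of_int ` {-N..N}) \<and> (e \<notin> E \<longrightarrow> f e = 0)}"
  proof (safe)
    fix m e assume m: "m \<in> S"
    then have mL: "m \<in> LL" and mq: "qf E (\<lambda>e. x e - m e) \<le> ?Q" by (auto simp: S_def)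
    show "e \<notin> E \<Longrightarrow> m e = 0" using mL by (auto simp: int_flows_def flow_iff)
    assume e: "e \<in> E"
    have "(x e - m e) * (x e - m e) \<le> qf E (\<lambda>e. x e - m e)"
      unfolding qf_def inner_ch_def using finE e by (intro member_le_sum) auto
    then have "\<bar>x e - m e\<bar> \<le> 1 + ?Q" using mq by (intro sq_bound) linarith
    moreover have "\<bar>x e\<bar> \<le> (\<Sum>e\<in>E. \<bar>x e\<bar>)" using finE e by (intro member_le_sum) auto
    ultimately have mb: "\<bar>m e\<bar> \<le> B" unfolding B_def by linarith
    obtain k where k: "m e = of_int k" using mL e by (auto simp: int_flows_def elim!: Ints_cases)
    have "\<bar>real_of_int k\<bar> \<le> B" using mb k by simp
    then have "\<bar>k\<bar> \<le> N" unfolding N_def by linarith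
    then show "m e \<in> of_int ` {-N..N}" unfolding k by (intro image_eqI[OF refl]) auto
  qed
  moreover have "finite {f. \<forall>e. (e \<in> E \<longrightarrow> f e \<in> (of_int ` {-N..N} :: real set)) \<and> (e \<notin> E \<longrightarrow> f e = 0)}"
    by (rule finite_set_of_finite_funs) (use finE in auto)
  ultimately have finS: "finite S" by (rule finite_subset)
  have 0: "(\<lambda>e. 0) \<in> S" using zero_LL by (simp add: S_def)
  define f where "f m = qf E (\<lambda>e. x e - m e)" for m
  have neS: "f ` S \<noteq> {}" using 0 by blast
  obtain m0 where m0: "m0 \<in> S" "f m0 = Min (f ` S)" using Min_in[OF finite_imageI[OF finS] neS] by auto
  have "\<forall>m\<in>LL. f m0 \<le> f m"
  proof
    fix m assume m: "m \<in> LL"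
    show "f m0 \<le> f m"
    proof (cases "m \<in> S")
      case True then show ?thesis using m0 finS by simp
    next
      case False
      then have "f m > ?Q" using m by (auto simp: S_def f_def)
      moreover have "f m0 \<le> f (\<lambda>e. 0)" using m0 finS 0 by simp
      moreover have "f (\<lambda>e. 0) = ?Q" by (simp add: f_def)
      ultimately show ?thesis by linarith
    qed
  qed
  then show ?thesis using m0(1) unfolding f_def S_def by blast
qed

lemma upper:
  assumes x: "x \<in> H"
  shows "\<exists>m\<in>LL. \<exists>D. strongly_connected_orientation V BL src tgt D \<and> qf E (\<lambda>e. x e - m e) \<le> qf E (vDD D)"
proof -
  obtain m0 where m0: "m0 \<in> LL" "\<forall>m\<in>LL. qf E (\<lambda>e. x e - m0 e) \<le> qf E (\<lambda>e. x e - m e)"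
    using nearest[OF x] by blast
  define y where "y = (\<lambda>e. x e - m0 e)"
  have yH: "y \<in> H" unfolding y_def using flow_diff[OF x] m0(1) by (simp add: int_flows_def)
  have vor: "2 * inner_ch E y (circ_chain C) \<le> qf E (circ_chain C)" if C: "is_circuit E src tgt C" for C
  proof -
    have "qf E y \<le> qf E (\<lambda>e. x e - (m0 e + circ_chain C e))"
      using m0(2)[rule_format, OF LL_add_circ[OF m0(1) C]] unfolding y_def by simp
    also have "(\<lambda>e. x e - (m0 e + circ_chain C e)) = (\<lambda>e. y e - circ_chain C e)" by (auto simp: y_def)
    finally show ?thesis using qf_diff[of E y "circ_chain C"] by linarith
  qed
  have inv0: "pinv (pos y)"
    unfolding pinv_def
  proof (intro conjI ballI)
    show "pos y \<subseteq> BL \<times> UNIV"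
    proof
      fix d assume d: "d \<in> pos y"
      obtain C where "is_circuit E src tgt C" "d \<in> C" using pos_in_circuit[OF yH d] by blast
      then have "fst d \<in> BL" using circuit_not_bridge by blast
      then show "d \<in> BL \<times> UNIV" by (cases d) auto
    qed
  next
    fix d assume "d \<in> pos y"
    then show "rv d \<notin> pos y" by (simp add: pos_def)
  next
    fix d assume d: "d \<in> pos y"
    obtain C where C: "is_circuit E src tgt C" "C \<subseteq> pos y" "d \<in> C" using pos_in_circuit[OF yH d] by blast
    have "(he d, ta d) \<in> (darcs src tgt C)\<^sup>*" using circuit_reach_self[OF C(1,3)] .
    then show "(he d, ta d) \<in> (darcs src tgt (pos y))\<^sup>*" using rtrancl_mono[OF darcs_mono[OF C(2)]] by blast
  qed
  obtain D where D: "pinv D" "pos y \<subseteq> D" "\<forall>e\<in>BL. (e, True) \<in> D \<or> (e, False) \<in> D"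
    using extend_all[OF inv0] by blast
  have sc: "strongly_connected_orientation V BL src tgt D" using pinv_sc[OF D(1,3)] .
  let ?v = "vDD D"
  have isv: "is_vD V E src tgt D ?v" using vD_props(2)[OF sc] .
  obtain L where L: "\<forall>p\<in>set L. fst p > 0 \<and> is_circuit E src tgt (snd p) \<and> snd p \<subseteq> pos y"
    "y = (\<lambda>e. \<Sum>p\<leftarrow>L. fst p * circ_chain (snd p) e)" using decomp[OF yH] by blast
  have "qf E y = (\<Sum>p\<leftarrow>L. inner_ch E y (\<lambda>e. fst p * circ_chain (snd p) e))"
    unfolding qf_def by (subst (2) L(2)) (rule inner_ch_sum_list_right)
  also have "\<dots> \<le> (\<Sum>p\<leftarrow>L. inner_ch E ?v (\<lambda>e. fst p * circ_chain (snd p) e))"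
  proof (rule sum_list_mono)
    fix p assume p: "p \<in> set L"
    then have c: "fst p > 0" "is_circuit E src tgt (snd p)" "snd p \<subseteq> D" using L(1) D(2) by auto
    have "2 * inner_ch E y (circ_chain (snd p)) \<le> 2 * inner_ch E ?v (circ_chain (snd p))"
      using vor[OF c(2)] isv c unfolding is_vD_def by simp
    then show "inner_ch E y (\<lambda>e. fst p * circ_chain (snd p) e) \<le> inner_ch E ?v (\<lambda>e. fst p * circ_chain (snd p) e)"
      unfolding inner_ch_scale_right using c(1) by (simp add: mult_left_mono)
  qed
  also have "\<dots> = inner_ch E ?v y"
  proof -
    have "inner_ch E ?v y = inner_ch E ?v (\<lambda>e. \<Sum>p\<leftarrow>L. fst p * circ_chain (snd p) e)" using L(2) by metis
    then show ?thesis using inner_ch_sum_list_right[where z="?v" and L=L and f="\<lambda>p e. fst p * circ_chain (snd p) e"] by simp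
  qed
  finally have "qf E y \<le> inner_ch E ?v y" .
  then have "qf E y \<le> qf E ?v" using inner_le_qf[of E ?v y] by linarith
  then show ?thesis using m0(1) sc unfolding y_def by blast
qed

end

theorem mainTheorem19:
  fixes V :: "'v set" and E :: "'e set" and src tgt :: "'e \<Rightarrow> 'v"
  assumes "finite V" and "finite E"
    and "\<forall>e\<in>E. src e \<in> V \<and> tgt e \<in> V"
    and "\<forall>u\<in>V. \<forall>v\<in>V. (u, v) \<in> (adj src tgt E)\<^sup>*"
  shows "(\<forall>D. strongly_connected_orientation V (bridgeless_edges E src tgt) src tgt D \<longrightarrow>
            (\<exists>!v. is_vD V E src tgt D v))
       \<and> cov_number (qf E) (flows V E src tgt) (int_flows V E src tgt)
         = Max {qf E (vD V E src tgt D) | D.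
                  strongly_connected_orientation V (bridgeless_edges E src tgt) src tgt D}"
proof -
  interpret G: graph V E src tgt using assms by unfold_locales auto
  let ?SC = "{D. strongly_connected_orientation V (bridgeless_edges E src tgt) src tgt D}"
  let ?M = "{qf E (vD V E src tgt D) | D. strongly_connected_orientation V (bridgeless_edges E src tgt) src tgt D}"
  have part1: "\<forall>D. strongly_connected_orientation V (bridgeless_edges E src tgt) src tgt D \<longrightarrow> (\<exists>!v. is_vD V E src tgt D v)"
    using G.vD_props(1) by blast
  have finSC: "finite ?SC"
  proof -
    have "?SC \<subseteq> Pow (E \<times> UNIV)" using G.BL_E
      by (auto simp: strongly_connected_orientation_def is_orientation_def)
    moreover have "finite (Pow (E \<times> (UNIV :: bool set)))" using assms(2) by simp
    ultimately show ?thesis by (rule finite_subset)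
  qed
  have "G.pinv {}" by (simp add: G.pinv_def)
  then obtain D0 where "G.pinv D0" "\<forall>e\<in>bridgeless_edges E src tgt. (e, True) \<in> D0 \<or> (e, False) \<in> D0"
    using G.extend_all by blast
  then have D0: "D0 \<in> ?SC" using G.pinv_sc by blast
  have Meq: "?M = (\<lambda>D. qf E (vD V E src tgt D)) ` ?SC" by blast
  have finM: "finite ?M" unfolding Meq using finSC by simp
  have neM: "?M \<noteq> {}" using D0 by blast
  have "Max ?M \<in> ?M" using Max_in[OF finM neM] .
  then obtain Dm where Dm0: "strongly_connected_orientation V (bridgeless_edges E src tgt) src tgt Dm"
    "Max ?M = qf E (vD V E src tgt Dm)" by blast
  then have Dm: "Dm \<in> ?SC" "qf E (vD V E src tgt Dm) = Max ?M" by auto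
  let ?R = "{r. \<forall>x\<in>flows V E src tgt. \<exists>m\<in>int_flows V E src tgt. qf E (\<lambda>e. x e - m e) \<le> r}"
  have inR: "Max ?M \<in> ?R"
  proof (safe)
    fix x assume x: "x \<in> flows V E src tgt"
    obtain m D where m: "m \<in> int_flows V E src tgt" "D \<in> ?SC" "qf E (\<lambda>e. x e - m e) \<le> qf E (vD V E src tgt D)"
      using G.upper[OF x] by blast
    have "qf E (vD V E src tgt D) \<le> Max ?M" using finM m(2) by (intro Max_ge) auto
    then show "\<exists>m\<in>int_flows V E src tgt. qf E (\<lambda>e. x e - m e) \<le> Max ?M" using m by force
  qed
  have lb: "Max ?M \<le> r" if r: "r \<in> ?R" for r
  proof -
    have "vD V E src tgt Dm \<in> flows V E src tgt" using G.vD_props(3) Dm(1) by blast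
    then obtain m where m: "m \<in> int_flows V E src tgt" "qf E (\<lambda>e. vD V E src tgt Dm e - m e) \<le> r"
      using r by blast
    have "qf E (vD V E src tgt Dm) \<le> qf E (\<lambda>e. vD V E src tgt Dm e - m e)"
      using G.lower Dm(1) m(1) by blast
    then show ?thesis using Dm(2) m(2) by linarith
  qed
  have "cov_number (qf E) (flows V E src tgt) (int_flows V E src tgt) = Max ?M"
    unfolding cov_number_def using inR lb by (rule cInf_eq_minimum)
  then show ?thesis using part1 by blast
qed

end
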